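(* For $b\in(0,\pi/2)$ let $I_1(b)=\int_{-b}^{b}\frac{\cos^5\varphi}{\sqrt{\cos^4\varphi-\cos^4b}}\,d\varphi$ and $I_2(b)=\int_{-b}^{b}\frac{\cos^3\varphi}{\sqrt{\cos^4\varphi-\cos^4b}}\,d\varphi$. Then the function $b\mapsto\frac{I_1(b)}{I_2(b)^3}$ is decreasing on $(0,\pi/2)$. *)

theory Defs
  imports "HOL-Analysis.Analysis"
begin

text \<open>The (improper, absolutely convergent) integrals, taken as Lebesgue integrals
  over the interval from -b to b.\<close>

definition I1 :: "real \<Rightarrow> real" where
  "I1 b = (LBINT phi=-b..b. cos phi ^ 5 / sqrt (cos phi ^ 4 - cos b ^ 4))"

definition I2 :: "real \<Rightarrow> real" where
  "I2 b = (LBINT phi=-b..b. cos phi ^ 3 / sqrt (cos phi ^ 4 - cos b ^ 4))"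

end

theory Submission
  imports Defs
begin

definition W :: "real \<Rightarrow> real \<Rightarrow> real" where
  "W m t = 1 + m - (1 - m) * (sin t)^2"

lemma W_ge: assumes "0 < m" "m \<le> 1" shows "2*m \<le> W m t"
proof -
  have "(sin t)^2 \<le> 1" by (simp add: sin_squared_eq)
  hence "(1-m)*(sin t)^2 \<le> (1-m)" using assms by (simp add: mult_left_le)
  thus ?thesis unfolding W_def by linarith
qed

lemma W_pos: assumes "0 < m" "m \<le> 1" shows "0 < W m t"
  using W_ge[OF assms, of t] assms by linarith

lemma alg1:
  fixes x y z u w :: real
  assumes r: "x > 0" "x^2 = w" "w = 1 + u - (1-u)*y^2" and sc: "y^2 + z^2 = 1" and m: "u \<noteq> 1"
  shows "((z*z - y*y)*x - y*z*(inverse x / 2 * (-(1-u)*(2*y*z))))/(x*x)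
     = (x - 2*u*(1+u)*(1/(w * x)))/(1-u)"
proof -
  have "1 - u \<noteq> 0" using m by simp
  have "w > 0" using r(1) r(2)[symmetric] by simp
  show ?thesis using r \<open>1 - u \<noteq> 0\<close> \<open>w > 0\<close>
    apply (simp add: field_simps)
    using r(2,3) sc by algebra
qed

lemma alg2:
  fixes x y z u w :: real
  assumes r: "x > 0" "x^2 = w" "w = 1 + u - (1-u)*y^2" and sc: "y^2 + z^2 = 1" and m: "u \<noteq> 1"
  shows "(z*z - y*y)*x + inverse x / 2 * (-(1-u)*(2*y*z)) * (y*z)
     = (3*(w*x) - (2+6*u)*x + 2*u*(1+u)*(1/x))/(1-u)"
proof -
  have "1 - u \<noteq> 0" using m by simp
  show ?thesis using r \<open>1 - u \<noteq> 0\<close>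
    apply (simp add: field_simps)
    using r(2,3) sc by algebra
qed

lemma dW: "((\<lambda>t. W m t) has_real_derivative (-(1-m)*(2 * sin t * cos t))) (at t)"
  unfolding W_def
  by (auto intro!: derivative_eq_intros simp: algebra_simps)

lemma dsqrtW: assumes "0 < m" "m \<le> 1"
  shows "((\<lambda>t. sqrt (W m t)) has_real_derivative (inverse (sqrt (W m t)) / 2) * (-(1-m)*(2 * sin t * cos t))) (at t)"
  by (rule DERIV_chain2[OF DERIV_real_sqrt dW]) (rule W_pos[OF assms])

lemma dsc: "((\<lambda>t. sin t * cos t) has_real_derivative (cos t * cos t - sin t * sin t)) (at t)"
  by (rule derivative_eq_intros refl | simp)+

lemma F1_deriv:
  assumes "0 < m" "m < 1"
  shows "((\<lambda>t. sin t * cos t / sqrt (W m t)) has_real_derivative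
     (sqrt (W m t) - 2*m*(1+m)*(1/(W m t * sqrt (W m t))))/(1-m)) (at t)"
proof -
  have Wp: "0 < W m t" using W_pos assms by simp
  have r: "sqrt (W m t) > 0" "(sqrt (W m t))^2 = W m t" "W m t = 1 + m - (1-m)*(sin t)^2"
    using Wp by (auto simp: W_def)
  show ?thesis
    apply (rule DERIV_cong[OF DERIV_divide[OF dsc dsqrtW[OF assms(1) less_imp_le[OF assms(2)]]]])
    using r apply simp
    apply (rule alg1[OF r])
    using assms by auto
qed

lemma F2_deriv:
  assumes "0 < m" "m < 1"
  shows "((\<lambda>t. sin t * cos t * sqrt (W m t)) has_real_derivative
     (3 * (W m t * sqrt (W m t)) - (2+6*m)* sqrt (W m t) + 2*m*(1+m)*(1/sqrt (W m t)))/(1-m)) (at t)"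
proof -
  have Wp: "0 < W m t" using W_pos assms by simp
  have r: "sqrt (W m t) > 0" "(sqrt (W m t))^2 = W m t" "W m t = 1 + m - (1-m)*(sin t)^2"
    using Wp by (auto simp: W_def)
  show ?thesis
    apply (rule DERIV_cong[OF DERIV_mult[OF dsc dsqrtW[OF assms(1) less_imp_le[OF assms(2)]]]])
    apply (rule alg2[OF r])
    using assms by auto
qed

abbreviation "II \<equiv> {-pi/2..pi/2::real}"

definition X :: "real \<Rightarrow> real" where "X m = integral II (\<lambda>t. 1 / sqrt (W m t))"
definition Y :: "real \<Rightarrow> real" where "Y m = integral II (\<lambda>t. sqrt (W m t))"
definition T :: "real \<Rightarrow> real" where "T m = integral II (\<lambda>t. 1 / (W m t * sqrt (W m t)))"
definition S :: "real \<Rightarrow> real" where "S m = integral II (\<lambda>t. W m t * sqrt (W m t))"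

lemma contW: "continuous_on A (\<lambda>t. W m t)"
  unfolding W_def by (intro continuous_intros)

lemma conts:
  assumes "0 < m" "m \<le> 1"
  shows "continuous_on A (\<lambda>t. 1 / sqrt (W m t))" "continuous_on A (\<lambda>t. sqrt (W m t))"
    "continuous_on A (\<lambda>t. 1 / (W m t * sqrt (W m t)))" "continuous_on A (\<lambda>t. W m t * sqrt (W m t))"
proof -
  have Wnz: "\<And>t. W m t \<noteq> 0" using W_pos[OF assms] by (metis less_irrefl)
  show "continuous_on A (\<lambda>t. 1 / sqrt (W m t))" "continuous_on A (\<lambda>t. sqrt (W m t))"
    "continuous_on A (\<lambda>t. 1 / (W m t * sqrt (W m t)))" "continuous_on A (\<lambda>t. W m t * sqrt (W m t))"
    using Wnz by (auto intro!: continuous_intros contW)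
qed

lemma hasX: "0 < m \<Longrightarrow> m \<le> 1 \<Longrightarrow> ((\<lambda>t. 1 / sqrt (W m t)) has_integral X m) II"
  unfolding X_def by (intro integrable_integral integrable_continuous_real conts)
lemma hasY: "0 < m \<Longrightarrow> m \<le> 1 \<Longrightarrow> ((\<lambda>t. sqrt (W m t)) has_integral Y m) II"
  unfolding Y_def by (intro integrable_integral integrable_continuous_real conts)
lemma hasT: "0 < m \<Longrightarrow> m \<le> 1 \<Longrightarrow> ((\<lambda>t. 1 / (W m t * sqrt (W m t))) has_integral T m) II"
  unfolding T_def by (intro integrable_integral integrable_continuous_real conts)
lemma hasS: "0 < m \<Longrightarrow> m \<le> 1 \<Longrightarrow> ((\<lambda>t. W m t * sqrt (W m t)) has_integral S m) II"
  unfolding S_def by (intro integrable_integral integrable_continuous_real conts)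

lemma FTC0:
  assumes "\<And>t. (F has_real_derivative f t) (at t)" "F (pi/2) = 0" "F (-pi/2) = 0"
  shows "(f has_integral 0) II"
proof -
  have "(f has_integral (F (pi/2) - F (-pi/2))) II"
    by (rule fundamental_theorem_of_calculus)
      (auto simp: has_real_derivative_iff_has_vector_derivative[symmetric] intro: has_field_derivative_at_within assms(1))
  thus ?thesis using assms by simp
qed

lemma Id1:
  assumes "0 < m" "m < 1"
  shows "Y m = 2*m*(1+m) * T m"
proof -
  have a: "((\<lambda>t. (sqrt (W m t) - 2*m*(1+m)*(1/(W m t * sqrt (W m t))))/(1-m)) has_integral 0) II"
    by (rule FTC0[OF F1_deriv[OF assms]]) auto
  have b: "((\<lambda>t. (sqrt (W m t) - 2*m*(1+m)*(1/(W m t * sqrt (W m t))))/(1-m)) has_integral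
       (Y m - 2*m*(1+m) * T m)/(1-m)) II"
    using assms by (intro has_integral_divide has_integral_diff has_integral_mult_right hasY hasT) auto
  have "(Y m - 2*m*(1+m) * T m)/(1-m) = 0" using has_integral_unique[OF b a] .
  thus ?thesis using assms by simp
qed

lemma Id2:
  assumes "0 < m" "m < 1"
  shows "3 * S m - (2+6*m) * Y m + 2*m*(1+m) * X m = 0"
proof -
  have a: "((\<lambda>t. (3 * (W m t * sqrt (W m t)) - (2+6*m)* sqrt (W m t) + 2*m*(1+m)*(1/sqrt (W m t)))/(1-m)) has_integral 0) II"
    by (rule FTC0[OF F2_deriv[OF assms]]) auto
  have b: "((\<lambda>t. (3 * (W m t * sqrt (W m t)) - (2+6*m)* sqrt (W m t) + 2*m*(1+m)*(1/sqrt (W m t)))/(1-m)) has_integral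
       (3 * S m - (2+6*m) * Y m + 2*m*(1+m) * X m)/(1-m)) II"
    using assms by (intro has_integral_divide has_integral_add has_integral_diff has_integral_mult_right hasY hasX hasS) auto
  show ?thesis using has_integral_unique[OF b a] assms by simp
qed

lemma X_pos: assumes "0 < m" "m \<le> 1" shows "0 < X m"
proof -
  have "integral II (\<lambda>t. 0) < integral II (\<lambda>t. 1 / sqrt (W m t))"
  proof (rule integral_less_real)
    show "{- pi / 2<..<pi / 2} \<noteq> {}" using pi_gt_zero by (simp add: not_le)
  qed (use W_pos[OF assms] conts[OF assms] in auto)
  thus ?thesis unfolding X_def by simp
qed

lemma Y_gt: assumes "0 < m" "m < 1" shows "2*m * X m < Y m"
proof -
  have "integral II (\<lambda>t. 2*m * (1 / sqrt (W m t))) < integral II (\<lambda>t. sqrt (W m t))"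
  proof (rule integral_less_real)
    fix t assume t: "t \<in> {-pi/2<..<pi/2}"
    have "cos t > 0" using t by (auto intro!: cos_gt_zero_pi)
    have Wp: "0 < W m t" using W_pos assms by simp
    have "W m t - 2*m = (1-m) * (cos t)^2" unfolding W_def by (simp add: cos_squared_eq algebra_simps)
    also have "\<dots> > 0" using assms \<open>cos t > 0\<close> by simp
    finally have "2*m < W m t" by simp
    then show "2*m * (1 / sqrt (W m t)) < sqrt (W m t)"
      using Wp by (simp add: field_simps)
  next
    show "{- pi / 2<..<pi / 2} \<noteq> {}" using pi_gt_zero by (simp add: not_le)
  next
    show "continuous_on II (\<lambda>t. 2*m * (1 / sqrt (W m t)))"
      using assms by (intro continuous_intros conts) auto
  next
    show "continuous_on II (\<lambda>t. sqrt (W m t))"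
      using assms by (intro continuous_intros conts) auto
  qed
  thus ?thesis unfolding X_def Y_def by (simp only: integral_mult_right)
qed


lemma dWm: "((\<lambda>m. W m t) has_real_derivative (1 + (sin t)^2)) (at m within U)"
  unfolding W_def by (auto intro!: derivative_eq_intros simp: algebra_simps)

lemma cont_fx:
  shows "continuous_on ({0<..<1} \<times> II) (\<lambda>(m, t). (1 + (sin t)^2) / 2 * (1 / (W m t * sqrt (W m t))))"
        "continuous_on ({0<..<1} \<times> II) (\<lambda>(m, t). (1 + (sin t)^2) / 2 * (1 / sqrt (W m t)))"
proof -
  have nz: "\<forall>x\<in>{0<..<1} \<times> II. 1 + fst x - (1 - fst x) * (sin (snd x))^2 \<noteq> 0"
    using W_pos unfolding W_def by (auto simp: less_imp_le) (metis less_irrefl less_imp_le)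
  show "continuous_on ({0<..<1} \<times> II) (\<lambda>(m, t). (1 + (sin t)^2) / 2 * (1 / (W m t * sqrt (W m t))))"
    unfolding W_def split_beta using nz by (intro continuous_intros) auto
  show "continuous_on ({0<..<1} \<times> II) (\<lambda>(m, t). (1 + (sin t)^2) / 2 * (1 / sqrt (W m t)))"
    unfolding W_def split_beta using nz by (intro continuous_intros) auto
qed

lemma pdX: assumes "0 < m" "m \<le> 1"
  shows "((\<lambda>m. 1 / sqrt (W m t)) has_real_derivative
     - ((1 + (sin t)^2) / 2 * (1 / (W m t * sqrt (W m t))))) (at m within U)"
proof -
  have Wp: "0 < W m t" using W_pos assms by simp
  have ds: "((\<lambda>m. sqrt (W m t)) has_real_derivative (inverse (sqrt (W m t)) / 2) * (1 + (sin t)^2)) (at m within U)"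
    by (rule DERIV_chain2[OF DERIV_real_sqrt dWm]) (rule Wp)
  have e: "W m t = sqrt (W m t) * sqrt (W m t)" using Wp by simp
  show ?thesis
    apply (rule DERIV_cong[OF DERIV_divide[OF DERIV_const ds]])
    using Wp apply simp
    apply (subst (3) e)
    using Wp by (simp add: field_simps)
qed

lemma pdY: assumes "0 < m" "m \<le> 1"
  shows "((\<lambda>m. sqrt (W m t)) has_real_derivative
     ((1 + (sin t)^2) / 2 * (1 / sqrt (W m t)))) (at m within U)"
proof -
  have Wp: "0 < W m t" using W_pos assms by simp
  show ?thesis
    by (rule DERIV_cong[OF DERIV_chain2[OF DERIV_real_sqrt dWm]]) (use Wp in \<open>auto simp: field_simps\<close>)
qed

lemma dX_raw: assumes "0 < m0" "m0 < 1"
  shows "(X has_real_derivative integral II (\<lambda>t. - ((1 + (sin t)^2) / 2 * (1 / (W m0 t * sqrt (W m0 t)))))) (at m0)"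
proof -
  have "((\<lambda>m. integral (cbox (-pi/2) (pi/2)) (\<lambda>t. 1 / sqrt (W m t))) has_field_derivative
     integral (cbox (-pi/2) (pi/2)) (\<lambda>t. - ((1 + (sin t)^2) / 2 * (1 / (W m0 t * sqrt (W m0 t)))))) (at m0 within {0<..<1})"
  proof (rule leibniz_rule_field_derivative)
    show "continuous_on ({0<..<1} \<times> cbox (- pi / 2) (pi / 2)) (\<lambda>(m, t). - ((1 + (sin t)^2) / 2 * (1 / (W m t * sqrt (W m t)))))"
      using continuous_on_minus[OF cont_fx(1)] by (simp add: split_beta)
  qed (use assms pdX conts in \<open>auto intro: integrable_continuous_real simp: less_imp_le\<close>)
  thus ?thesis unfolding X_def using assms
    by (simp add: at_within_open[OF _ open_greaterThanLessThan])
qed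

lemma dY_raw: assumes "0 < m0" "m0 < 1"
  shows "(Y has_real_derivative integral II (\<lambda>t. (1 + (sin t)^2) / 2 * (1 / sqrt (W m0 t)))) (at m0)"
proof -
  have "((\<lambda>m. integral (cbox (-pi/2) (pi/2)) (\<lambda>t. sqrt (W m t))) has_field_derivative
     integral (cbox (-pi/2) (pi/2)) (\<lambda>t. (1 + (sin t)^2) / 2 * (1 / sqrt (W m0 t)))) (at m0 within {0<..<1})"
  proof (rule leibniz_rule_field_derivative)
    show "continuous_on ({0<..<1} \<times> cbox (- pi / 2) (pi / 2)) (\<lambda>(m, t). (1 + (sin t)^2) / 2 * (1 / sqrt (W m t)))"
      using cont_fx(2) by simp
  qed (use assms pdY conts in \<open>auto intro: integrable_continuous_real simp: less_imp_le\<close>)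
  thus ?thesis unfolding Y_def using assms
    by (simp add: at_within_open[OF _ open_greaterThanLessThan])
qed


lemma alg3: fixes w r k :: real assumes "r > 0" "r*r = w" "k \<noteq> 0"
  shows "- ((2 - w) / k / 2 * (1 / (w * r))) = (-1/k) * (1/(w * r)) + (1/(2*k)) * (1/r)"
proof -
  have "w \<noteq> 0" using assms by auto
  thus ?thesis using assms by (simp add: field_simps)
qed

lemma alg4: fixes w r k :: real assumes "r > 0" "r*r = w" "k \<noteq> 0"
  shows "(2 - w) / k / 2 * (1 / r) = (1/k) * (1/r) + (-1/(2*k)) * r"
proof -
  have "w \<noteq> 0" using assms by auto
  thus ?thesis using assms(1) assms(2)[symmetric] assms(3) by (simp add: field_simps)
qed

lemma alg5: fixes k m T X :: real assumes "k \<noteq> 0" "m > 0"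
  shows "(-1/k) * T + (1/(2*k)) * X = (X - (2*m*(1+m)*T) / (m*(1+m))) / (2*k)"
proof -
  have "m*(1+m) \<noteq> 0" using assms by auto
  hence "(2*m*(1+m)*T) / (m*(1+m)) = 2*T" by (simp add: field_simps)
  thus ?thesis using assms by (simp add: field_simps)
qed

lemma alg6: fixes k X Y :: real assumes "k \<noteq> 0"
  shows "(1/k) * X + (-1/(2*k)) * Y = (2 * X - Y) / (2*k)"
  using assms by (simp add: field_simps)

definition Xd :: "real \<Rightarrow> real" where "Xd m = (X m - Y m / (m*(1+m))) / (2*(1-m))"
definition Yd :: "real \<Rightarrow> real" where "Yd m = (2 * X m - Y m) / (2*(1-m))"

lemma dX: assumes "0 < m" "m < 1" shows "(X has_real_derivative Xd m) (at m)"
proof -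
  have eq: "- ((1 + (sin t)^2) / 2 * (1 / (W m t * sqrt (W m t)))) =
     (-1/(1-m)) * (1/(W m t * sqrt(W m t))) + (1/(2*(1-m))) * (1/sqrt(W m t))" for t
  proof -
    have Wp: "0 < W m t" using W_pos assms by simp
    have s: "1 + (sin t)^2 = (2 - W m t) / (1-m)" using assms unfolding W_def by (simp add: field_simps)
    show ?thesis unfolding s by (rule alg3) (use Wp assms in auto)
  qed
  have "((\<lambda>t. (-1/(1-m)) * (1/(W m t * sqrt(W m t))) + (1/(2*(1-m))) * (1/sqrt(W m t))) has_integral
     ((-1/(1-m)) * T m + (1/(2*(1-m))) * X m)) II"
    using assms by (intro has_integral_add has_integral_mult_right hasT hasX) auto
  hence "integral II (\<lambda>t. - ((1 + (sin t)^2) / 2 * (1 / (W m t * sqrt (W m t))))) = (-1/(1-m)) * T m + (1/(2*(1-m))) * X m"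
    by (simp only: eq integral_unique)
  also have "\<dots> = Xd m" unfolding Xd_def Id1[OF assms] by (rule alg5) (use assms in auto)
  finally show ?thesis using dX_raw[OF assms] by simp
qed

lemma dY: assumes "0 < m" "m < 1" shows "(Y has_real_derivative Yd m) (at m)"
proof -
  have eq: "(1 + (sin t)^2) / 2 * (1 / sqrt (W m t)) =
     (1/(1-m)) * (1/sqrt(W m t)) + (-1/(2*(1-m))) * sqrt(W m t)" for t
  proof -
    have Wp: "0 < W m t" using W_pos assms by simp
    have s: "1 + (sin t)^2 = (2 - W m t) / (1-m)" using assms unfolding W_def by (simp add: field_simps)
    show ?thesis unfolding s by (rule alg4) (use Wp assms in auto)
  qed
  have "((\<lambda>t. (1/(1-m)) * (1/sqrt(W m t)) + (-1/(2*(1-m))) * sqrt(W m t)) has_integral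
     ((1/(1-m)) * X m + (-1/(2*(1-m))) * Y m)) II"
    using assms by (intro has_integral_add has_integral_mult_right hasY hasX) auto
  hence "integral II (\<lambda>t. (1 + (sin t)^2) / 2 * (1 / sqrt (W m t))) = (1/(1-m)) * X m + (-1/(2*(1-m))) * Y m"
    by (simp only: eq integral_unique)
  also have "\<dots> = Yd m" unfolding Yd_def by (rule alg6) (use assms in auto)
  finally show ?thesis using dY_raw[OF assms] by simp
qed


lemma algA:
  fixes x y m k xd yd p :: real
  assumes k: "k + m = 1" "k \<noteq> 0" and p: "p = 2*k*(m*(1+m))" "p \<noteq> 0" and m: "1 + m \<noteq> 0"
    and xd: "xd = (m*(1+m)*x - y) / p" and yd: "yd = (2 * x - y) / (2*k)"
  shows "(2*yd + (2*m-2)*x + xd*(m^2-2*m))*(y-m*x) - 3*(2*y+(m^2-2*m)*x)*(yd - (x + xd*m))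
     = 3*m*y*(y-2*m*x)/(2*k*(1+m))"
proof -
  have kk: "k = 1 - m" using k(1) by simp
  have k1: "k * (1 + m) \<noteq> 0" using k(2) m by simp
  have "k * 2 + k * (m * 2) = 2 * (k * (1 + m))" by (simp add: algebra_simps)
  hence k2: "k * 2 + k * (m * 2) \<noteq> 0" using k1 by simp
  show ?thesis unfolding xd yd using k(2) m p(2) k1 k2
    apply (simp add: field_simps)
    unfolding p(1) kk by algebra
qed

lemma algB:
  fixes x y m xd yd :: real
  assumes D: "y - m * x \<noteq> 0"
  shows "((0 * y + yd * 2 +
      ((real 2 * (1 * m ^ (2 - Suc 0)) - (0 * m + 1 * 2)) * x +
       xd * (m\<^sup>2 - 2 * m))) *
     (3 * (y - m * x) ^ 3) -
     (2 * y + (m\<^sup>2 - 2 * m) * x) *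
     (0 * (y - m * x) ^ 3 +
      real 3 *
      ((yd - (1 * x + xd * m)) * (y - m * x) ^ (3 - Suc 0)) *
      3)) /
    (3 * (y - m * x) ^ 3 * (3 * (y - m * x) ^ 3)) =
    ((2*yd + (2*m-2)*x + xd*(m^2-2*m))*(y-m*x) - 3*(2*y+(m^2-2*m)*x)*(yd - (x + xd*m))) / (3 * (y - m*x)^4)"
proof -
  have "3 * (y - m * x) ^ 3 * (3 * (y - m * x) ^ 3) \<noteq> 0" "3 * (y - m*x)^4 \<noteq> 0" using D by auto
  thus ?thesis
    apply (subst frac_eq_eq)
      apply assumption+
    apply (simp add: eval_nat_numeral)
    by algebra
qed

lemma aux_frac: fixes a b c d :: real assumes "c \<noteq> 0" "d \<noteq> 0"
  shows "(a - b/c)/d = (c*a - b)/(d*c)"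
  using assms by (simp add: field_simps)

definition G :: "real \<Rightarrow> real" where
  "G m = (2 * Y m + (m^2 - 2*m) * X m) / (3 * (Y m - m * X m)^3)"

lemma dG: assumes "0 < m" "m < 1"
  shows "\<exists>d. (G has_real_derivative d) (at m) \<and> d > 0"
proof -
  have D: "Y m - m * X m > 0" using Y_gt[OF assms] X_pos[of m] assms by (smt (verit) mult_less_cancel_right)
  define L where "L = (2*Yd m + (2*m-2)*X m + Xd m*(m^2-2*m))*(Y m-m*X m) - 3*(2*Y m+(m^2-2*m)*X m)*(Yd m - (X m + Xd m*m))"
  have hd: "(G has_real_derivative ((2*Yd m + (2*m-2)*X m + Xd m*(m^2-2*m))*(Y m-m*X m) - 3*(2*Y m+(m^2-2*m)*X m)*(Yd m - (X m + Xd m*m))) / (3 * (Y m - m*X m)^4)) (at m)"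
    unfolding G_def[abs_def]
    apply (rule DERIV_cong)
     apply (rule derivative_eq_intros dX[OF assms] dY[OF assms] refl)+
    using D apply simp
    apply (rule trans[OF algB])
    using D by simp_all
  have he: "L = 3*m*Y m*(Y m-2*m*X m)/(2*(1-m)*(1+m))"
    unfolding L_def
  proof (rule algA[where p = "2*(1-m)*(m*(1+m))" and k = "1 - m"])
    show "Xd m = (m * (1 + m) * X m - Y m) / (2 * (1 - m) * (m * (1 + m)))"
      unfolding Xd_def by (rule aux_frac) (use assms in auto)
  qed (use assms in \<open>auto simp: Yd_def\<close>)
  have hp: "3*m*Y m*(Y m-2*m*X m)/(2*(1-m)*(1+m)) > 0"
  proof -
    have "0 < m * X m" using assms X_pos[of m] by simp
    hence "0 < Y m" using D by linarith
    thus ?thesis using assms Y_gt[OF assms] by (intro divide_pos_pos mult_pos_pos) auto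
  qed
  have "0 < L / (3 * (Y m - m*X m)^4)" using he hp D by (intro divide_pos_pos) auto
  thus ?thesis using hd unfolding L_def by blast
qed

lemma G_mono: assumes "0 < a" "a < b" "b < 1" shows "G a < G b"
  by (rule DERIV_pos_imp_increasing[OF assms(2)]) (use assms dG in auto)


lemma subst_pt:
  fixes a m s co p :: real and k :: nat
  assumes a: "0 < a" "a < 1" and m: "m = 1 - a^2" and co: "co > 0" and sc: "s^2 + co^2 = 1"
    and p: "p = 1 - (a * s)^2"
  shows "sqrt p ^ (2*k+1) / sqrt (p^2 - m^2) * (a * co / sqrt p) = (p + m - m)^k / sqrt (p + m)"
proof -
  have c2: "co^2 = 1 - s^2" using sc by simp
  have pm: "p - m = (a*co)^2" unfolding m p power_mult_distrib c2 by (simp add: algebra_simps)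
  have mpos: "m > 0" using a m by (simp add: power_less_one_iff abs_square_less_1)
  have "(a*co)^2 > 0" using a co by simp
  hence p_gt: "p > m" using pm by linarith
  have ppos: "p > 0" using p_gt mpos by linarith
  have e1: "p^2 - m^2 = (a*co)^2 * (p + m)" using pm by (simp add: algebra_simps power2_eq_square)
  have e2: "sqrt (p^2 - m^2) = a*co* sqrt (p+m)" unfolding e1 using a co by (simp add: real_sqrt_mult)
  have e3: "sqrt p ^ (2*k+1) = p^k * sqrt p" using ppos
    by (simp add: power_mult power_add)
  have "sqrt (p+m) > 0" using ppos mpos by simp
  thus ?thesis unfolding e2 e3 using a co ppos by (simp add: field_simps)
qed


lemma subst_int:
  fixes b0 :: real and k :: nat
  assumes b0: "0 < b0" "b0 < pi/2"
  shows "(LBINT x=-b0..b0. cos x ^ (2*k+1) / sqrt (cos x ^ 4 - cos b0 ^ 4)) =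
    integral II (\<lambda>t. (W ((cos b0)^2) t - (cos b0)^2)^k / sqrt (W ((cos b0)^2) t))"
proof -
  define a where "a = sin b0"
  define m where "m = (cos b0)^2"
  have cb: "cos b0 > 0" using b0 by (intro cos_gt_zero_pi) auto
  have a0: "0 < a" unfolding a_def using b0 by (intro sin_gt_zero) auto
  have m: "m = 1 - a^2" unfolding m_def a_def by (simp add: cos_squared_eq)
  have mpos: "0 < m" unfolding m_def using cb by simp
  have a1: "a < 1"
  proof -
    have "a^2 < 1" using m mpos by linarith
    thus ?thesis using a0 by (simp add: power_less_one_iff abs_square_less_1)
  qed
  have m1: "m < 1" using m a0 by simp
  define f where "f = (\<lambda>x. cos x ^ (2*k+1) / sqrt (cos x ^ 4 - cos b0 ^ 4))"
  define g where "g = (\<lambda>t. arcsin (a * sin t))"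
  define g' where "g' = (\<lambda>t. a * cos t / sqrt (1 - (a * sin t)^2))"
  define h where "h = (\<lambda>t. (W m t - m)^k / sqrt (W m t))"
  have bnd: "-1 < a * sin t" "a * sin t < 1" for t
  proof -
    have "\<bar>a * sin t\<bar> \<le> a" using a0 abs_sin_le_one[of t] by (simp add: abs_mult mult_left_le)
    thus "-1 < a * sin t" "a * sin t < 1" using a1 by auto
  qed
  have sqpos: "0 < 1 - (a * sin t)^2" for t
    using bnd[of t] by (simp add: abs_square_less_1)
  have dg: "(g has_real_derivative g' t) (at t)" for t
    unfolding g_def g'_def
    by (rule DERIV_cong[OF DERIV_chain2[OF DERIV_arcsin[OF bnd] DERIV_cmult[OF DERIV_sin]]])
       (simp add: divide_inverse mult.commute)
  have cg': "isCont g' t" for t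
    unfolding g'_def using sqpos[of t] by (intro continuous_intros) auto
  have cg: "isCont g t" for t using dg DERIV_isCont by blast
  have gL: "g (-pi/2) = -b0" unfolding g_def a_def using b0
    by (simp add: arcsin_minus arcsin_sin)
  have gR: "g (pi/2) = b0" unfolding g_def a_def using b0
    by (simp add: arcsin_sin)
  have cosg: "cos (g t) = sqrt (1 - (a * sin t)^2)" for t
    unfolding g_def using bnd[of t] by (intro cos_arcsin) auto
  have c4: "cos b0 ^ 4 = m^2" unfolding m_def by simp
  have cosg4: "cos (g t) ^ 4 = (1 - (a * sin t)^2)^2" for t
  proof -
    have "sqrt (1 - (a * sin t)^2) ^ 4 = (sqrt (1 - (a * sin t)^2) ^ 2) ^ 2" by (simp flip: power_mult)
    thus ?thesis unfolding cosg using sqpos[of t] by simp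
  qed
  have Wp: "W m t = (1 - (a * sin t)^2) + m" for t
    unfolding W_def m by (simp add: power_mult_distrib algebra_simps)
  have pm: "(1 - (a * sin t)^2)^2 - m^2 > 0" if "t \<in> {-pi/2<..<pi/2}" for t
  proof -
    have co: "cos t > 0" using that by (intro cos_gt_zero_pi) auto
    have "(1 - (a * sin t)^2) - m = (a * cos t)^2" unfolding m power_mult_distrib
      by (simp add: cos_squared_eq algebra_simps)
    moreover have "(a * cos t)^2 > 0" using co a0 by simp
    ultimately have "(1 - (a * sin t)^2) > m" by linarith
    thus ?thesis using mpos by (simp add: power_strict_mono)
  qed
  have key: "f (g t) * g' t = h t" if "t \<in> {-pi/2<..<pi/2}" for t
  proof -
    have co: "cos t > 0" using that by (intro cos_gt_zero_pi) auto
    have "sqrt (1 - (a * sin t)^2) ^ (2*k+1) / sqrt ((1 - (a * sin t)^2)^2 - m^2) * (a * cos t / sqrt (1 - (a * sin t)^2))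
       = ((1 - (a * sin t)^2) + m - m)^k / sqrt ((1 - (a * sin t)^2) + m)"
      by (rule subst_pt[OF a0 a1 m co]) auto
    thus ?thesis unfolding f_def h_def g'_def Wp cosg4 c4 by (simp add: cosg)
  qed
  have Wpos: "0 < W m t" for t using W_pos mpos m1 by simp
  have hcont: "continuous_on A h" for A
    unfolding h_def using Wpos by (auto intro!: continuous_intros contW simp: less_imp_le) (metis less_irrefl)
  have hint: "set_integrable lborel (einterval (-pi/2) (pi/2)) h"
    by (rule set_integrable_subset[OF borel_integrable_atLeastAtMost'[OF hcont, of "-pi/2" "pi/2"]]) auto
  have fgint: "set_integrable lborel (einterval (-pi/2) (pi/2)) (\<lambda>x. f (g x) * g' x)"
    using hint by (subst set_integrable_cong[OF refl refl, where f' = h]) (auto simp: key)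
  have "(LBINT x=-b0..b0. f x) = (LBINT x=-pi/2..pi/2. f (g x) * g' x)"
  proof (rule interval_integral_substitution_nonneg(2)[where a="ereal (-pi/2)" and b="ereal (pi/2)"])
    show "ereal (- pi / 2) < ereal (pi / 2)" using pi_gt_zero by simp
    show "DERIV g x :> g' x" for x by (rule dg)
    show "isCont g' x" for x by (rule cg')
    show "0 \<le> g' x" if "ereal (- pi / 2) \<le> ereal x" "ereal x \<le> ereal (pi / 2)" for x
    proof -
      have "cos x \<ge> 0" using that by (intro cos_ge_zero) auto
      thus ?thesis unfolding g'_def using a0 sqpos[of x] by (intro divide_nonneg_nonneg mult_nonneg_nonneg) auto
    qed
    show "0 \<le> f (g x)" if "ereal (- pi / 2) < ereal x" "ereal x < ereal (pi / 2)" for x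
    proof -
      have "cos (g x) ^ 4 - cos b0 ^ 4 > 0" unfolding cosg4 c4 using pm[of x] that by simp
      moreover have "cos (g x) \<ge> 0" unfolding cosg using sqpos[of x] by simp
      ultimately show ?thesis unfolding f_def by (intro divide_nonneg_nonneg zero_le_power) auto
    qed
    show "isCont f (g x)" if "ereal (- pi / 2) < ereal x" "ereal x < ereal (pi / 2)" for x
    proof -
      have "cos (g x) ^ 4 - cos b0 ^ 4 > 0" unfolding cosg4 c4 using pm[of x] that by simp
      thus ?thesis unfolding f_def by (intro continuous_intros) auto
    qed
    show "((ereal \<circ> g \<circ> real_of_ereal) \<longlongrightarrow> ereal (-b0)) (at_right (ereal (- pi / 2)))"
      unfolding ereal_tendsto_simps gL[symmetric]
      using cg[of "-pi/2"] by (simp add: isCont_def filterlim_at_split)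
    show "((ereal \<circ> g \<circ> real_of_ereal) \<longlongrightarrow> ereal b0) (at_left (ereal (pi / 2)))"
      unfolding ereal_tendsto_simps gR[symmetric]
      using cg[of "pi/2"] by (simp add: isCont_def filterlim_at_split)
    show "set_integrable lborel (einterval (ereal (- pi / 2)) (ereal (pi / 2))) (\<lambda>x. f (g x) * g' x)"
      using fgint by simp
  qed
  also have "\<dots> = (LBINT x=-pi/2..pi/2. h x)"
    by (rule interval_integral_cong) (use pi_gt_zero in \<open>auto simp: key min_def max_def\<close>)
  also have "\<dots> = integral II h"
    by (rule interval_integral_eq_integral) (use pi_gt_zero hcont borel_integrable_atLeastAtMost' in auto)
  finally show ?thesis unfolding f_def h_def m_def .
qed


lemma I2_eq: assumes "0 < b" "b < pi/2"
  shows "I2 b = Y ((cos b)^2) - (cos b)^2 * X ((cos b)^2)"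
proof -
  define m where "m = (cos b)^2"
  have cb: "cos b > 0" using assms by (intro cos_gt_zero_pi) auto
  have sb: "sin b > 0" using assms by (intro sin_gt_zero) auto
  have mpos: "0 < m" "m < 1" unfolding m_def using cb sb by (simp, simp add: cos_squared_eq)
  have "I2 b = integral II (\<lambda>t. (W m t - m) / sqrt (W m t))"
    unfolding I2_def m_def using subst_int[OF assms, of 1] by simp
  also have "\<dots> = integral II (\<lambda>t. sqrt (W m t) + (-m) * (1 / sqrt (W m t)))"
  proof (rule integral_cong)
    fix t
    have Wp: "0 < W m t" using W_pos mpos by simp
    have e: "W m t = sqrt (W m t) * sqrt (W m t)" using Wp by simp
    show "(W m t - m) / sqrt (W m t) = sqrt (W m t) + (-m) * (1 / sqrt (W m t))"
      apply (subst (1) e) using Wp by (simp add: field_simps)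
  qed
  also have "\<dots> = Y m + (-m) * X m"
    using mpos by (intro integral_unique has_integral_add has_integral_mult_right hasY hasX) auto
  finally show ?thesis unfolding m_def by simp
qed

lemma I1_eq: assumes "0 < b" "b < pi/2"
  shows "I1 b = (2 * Y ((cos b)^2) + (((cos b)^2)^2 - 2*(cos b)^2) * X ((cos b)^2)) / 3"
proof -
  define m where "m = (cos b)^2"
  have cb: "cos b > 0" using assms by (intro cos_gt_zero_pi) auto
  have sb: "sin b > 0" using assms by (intro sin_gt_zero) auto
  have mpos: "0 < m" "m < 1" unfolding m_def using cb sb by (simp, simp add: cos_squared_eq)
  have "I1 b = integral II (\<lambda>t. (W m t - m)^2 / sqrt (W m t))"
    unfolding I1_def m_def using subst_int[OF assms, of 2] by simp
  also have "\<dots> = integral II (\<lambda>t. W m t * sqrt (W m t) + (-2*m) * sqrt (W m t) + m^2 * (1 / sqrt (W m t)))"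
  proof (rule integral_cong)
    fix t
    have Wp: "0 < W m t" using W_pos mpos by simp
    have e: "W m t = sqrt (W m t) * sqrt (W m t)" using Wp by simp
    show "(W m t - m)^2 / sqrt (W m t) = W m t * sqrt (W m t) + (-2*m) * sqrt (W m t) + m^2 * (1 / sqrt (W m t))"
      apply (subst (1 2) e) using Wp by (simp add: field_simps power2_eq_square)
  qed
  also have "\<dots> = S m + (-2*m) * Y m + m^2 * X m"
    using mpos by (intro integral_unique has_integral_add has_integral_mult_right hasY hasX hasS) auto
  also have "\<dots> = (2 * Y m + (m^2 - 2*m) * X m) / 3"
    using Id2[OF mpos] by (simp add: field_simps power2_eq_square)
  finally show ?thesis unfolding m_def by simp
qed

theorem proposition13:
  "strict_antimono_on {0<..<pi/2} (\<lambda>b. I1 b / (I2 b) ^ 3)"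
proof (rule monotone_onI)
  fix b1 b2 assume b1: "b1 \<in> {0<..<pi/2}" and b2: "b2 \<in> {0<..<pi/2}" and lt: "b1 < b2"
  have F: "I1 b / (I2 b)^3 = G ((cos b)^2)" if "b \<in> {0<..<pi/2}" for b
  proof -
    have bb: "0 < b" "b < pi/2" using that by auto
    show ?thesis unfolding G_def I1_eq[OF bb] I2_eq[OF bb] by (simp add: divide_divide_eq_left)
  qed
  have c1: "cos b2 < cos b1" using b1 b2 lt by (intro cos_monotone_0_pi) auto
  have c2: "cos b2 > 0" using b2 by (intro cos_gt_zero_pi) auto
  have s1: "sin b1 > 0" using b1 by (intro sin_gt_zero) auto
  have "(cos b2)^2 < (cos b1)^2" using c1 c2 by (simp add: power_strict_mono)
  moreover have "0 < (cos b2)^2" using c2 by simp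
  moreover have "(cos b1)^2 < 1" using s1 by (simp add: cos_squared_eq)
  ultimately have "G ((cos b2)^2) < G ((cos b1)^2)" by (intro G_mono)
  thus "I1 b1 / (I2 b1)^3 > I1 b2 / (I2 b2)^3" using F b1 b2 by simp
qed

end
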